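(* Let $n\ge2$, $0<R<\sqrt{\tfrac38(3n-5)(2n-3)^3}$, let $u_0$ satisfy (C1)–(C6), and let $u$ be the solution of $(\ast)$. Then $u(\cdot,t)\to u^*$ uniformly in $B_R$ as $t\to\infty$, with an exponential rate: there are $c>0$ and $\mu>0$ such that $\sup_{x\in B_R}|u(x,t)-u^*(|x|)|\le c\,e^{-\mu t}$ for all $t\ge0$.
   Context: $B_R=\{x\in\mathbb R^n:|x|<R\}$; radially symmetric functions are written as functions of $r=|x|$ and $t$, $u_r$ is the radial derivative. $\alpha:=\sqrt[3]{9n-15}$, $u^*(r):=-\alpha r^{1/3}$, $\nu:=\tfrac16\sqrt{36n^2-96n+61}$. Conditions on $u_0$: (C1) $u_0\in C^2(\overline{B_R}\setminus\{0\})$; (C2) $u_0$ radially symmetric; (C3) $u^*\ge u_0$; (C4) $\limsup_{r\searrow0}|r^{\frac32-n-\nu}(u^*(r)-u_0(r))|<\infty$; (C5) $u_0(R)=u^*(R)$; (C6) there is $C>0$ with $0\ge u_{0r}(r)\ge -Cr^{-2/3}$ for all $r\in(0,R)$. Problem $(\ast)$: $u_t=\Delta u+uu_r^3$ in $(B_R\setminus\{0\})\times(0,\infty)$, $u(0,t)=0$, $u(R,t)=u^*(R)$ for $t>0$, $u(\cdot,0)=u_0$; it has a unique classical solution $u\in C(\overline{B_R}\times[0,\infty))\cap C^{2,1}((B_R\setminus\{0\})\times(0,\infty))$ with $u_r\le0$. *)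

theory Defs
  imports "HOL-Analysis.Analysis"
begin

definition alpha :: "nat \<Rightarrow> real" where
  "alpha n = root 3 (9 * real n - 15)"

definition ustar :: "nat \<Rightarrow> real \<Rightarrow> real" where
  "ustar n r = - alpha n * root 3 r"

definition nu :: "nat \<Rightarrow> real" where
  "nu n = sqrt (36 * (real n)^2 - 96 * real n + 61) / 6"

end

theory Submission
  imports Defs
begin


lemma second_deriv_max:
  fixes g g' :: "real \<Rightarrow> real"
  assumes d: "d > 0"
    and g: "\<And>s. \<bar>s\<bar> < d \<Longrightarrow> (g has_real_derivative g' s) (at s)"
    and g2: "(g' has_real_derivative D) (at 0)"
    and mx: "\<And>s. \<bar>s\<bar> < d \<Longrightarrow> g s \<le> g 0"
  shows "D \<le> 0"
proof (rule ccontr)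
  assume "\<not> D \<le> 0" hence Dp: "D > 0" by simp
  have g0: "g' 0 = 0"
    by (rule DERIV_local_max[OF g[of 0] d]) (use d mx in auto)
  obtain e where e: "e > 0" "\<And>h. h > 0 \<Longrightarrow> h < e \<Longrightarrow> g' 0 < g' (0 + h)"
    using DERIV_pos_inc_right[OF g2 Dp] by blast
  define h where "h = min d e / 2"
  have h: "0 < h" "h < d" "h < e" using d e by (auto simp: h_def)
  obtain z where z: "z > 0" "z < h" "g h - g 0 = (h - 0) * g' z"
    using MVT2[of 0 h g g'] h g by force
  have "g' z > 0" using e(2)[of z] z h g0 by simp
  hence "h * g' z > 0" using h by simp
  hence "g h > g 0" using z by simp
  moreover have "g h \<le> g 0" using mx[of h] h by simp
  ultimately show False by simp
qed



lemma line_deriv: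
  fixes f :: "'a::real_normed_vector \<Rightarrow> real"
  assumes "(f has_derivative (\<lambda>h. Df h)) (at (x + s *\<^sub>R e))" "linear Df"
  shows "((\<lambda>s. f (x + s *\<^sub>R e)) has_real_derivative Df e) (at s)"
proof -
  have l: "((\<lambda>s. x + s *\<^sub>R e) has_derivative (\<lambda>h. h *\<^sub>R e)) (at s)"
    by (auto intro!: derivative_eq_intros)
  have "((\<lambda>s. f (x + s *\<^sub>R e)) has_derivative (\<lambda>h. Df (h *\<^sub>R e))) (at s)"
    using has_derivative_compose[OF l assms(1)] by (simp add: o_def)
  moreover have "(\<lambda>h. Df (h *\<^sub>R e)) = (\<lambda>h. Df e * h)"
    using assms(2) by (auto simp: linear_scale)
  ultimately show ?thesis by (simp add: has_field_derivative_def)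
qed

lemma line_norm_deriv:
  fixes x e :: "'a::real_inner"
  assumes "x + s *\<^sub>R e \<noteq> 0"
  shows "((\<lambda>s. norm (x + s *\<^sub>R e)) has_real_derivative ((x + s *\<^sub>R e) \<bullet> e / norm (x + s *\<^sub>R e))) (at s)"
proof -
  have "((\<lambda>s. norm (x + s *\<^sub>R e)) has_real_derivative (e \<bullet> sgn (x + s *\<^sub>R e))) (at s)"
    by (rule line_deriv[OF has_derivative_norm[OF assms]]) (simp add: linear_iff inner_add_left)
  moreover have "e \<bullet> sgn (x + s *\<^sub>R e) = (x + s *\<^sub>R e) \<bullet> e / norm (x + s *\<^sub>R e)"
    by (simp add: sgn_div_norm inner_commute divide_inverse mult.commute)
  ultimately show ?thesis by simp
qed



lemma spatial_max:
  fixes u :: "real^'n \<Rightarrow> real" and Du :: "real^'n \<Rightarrow> real^'n" and D2 :: "real^'n^'n"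
    and G G1 :: "real \<Rightarrow> real" and G2 \<sigma> d :: real and x1 :: "real^'n"
  assumes x1: "x1 \<noteq> 0" and d: "0 < d" "d \<le> norm x1"
    and ud: "\<forall>y\<in>ball x1 d. (u has_derivative (\<lambda>h. Du y \<bullet> h)) (at y)"
    and ud2: "(Du has_derivative (\<lambda>h. D2 *v h)) (at x1)"
    and Gd: "\<forall>\<rho>>0. (G has_real_derivative G1 \<rho>) (at \<rho>)"
    and G1d: "(G1 has_real_derivative G2) (at (norm x1))"
    and mx: "\<forall>y\<in>ball x1 d. \<sigma> * (G (norm y) - u y) \<le> \<sigma> * (G (norm x1) - u x1)"
  shows "\<sigma> * (G1 (norm x1) - Du x1 \<bullet> (x1 /\<^sub>R norm x1)) = 0"
    and "\<sigma> * (G2 + (real CARD('n) - 1) / norm x1 * G1 (norm x1) - (\<Sum>i\<in>UNIV. D2 $ i $ i)) \<le> 0"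
proof -
  define r where "r = norm x1"
  have r: "r > 0" using x1 by (simp add: r_def)
  have inball: "x1 + s *\<^sub>R e \<in> ball x1 d" if "\<bar>s\<bar> < d" "norm e = 1" for s e
    using that by (simp add: dist_norm)
  have nz: "x1 + s *\<^sub>R e \<noteq> 0" if "\<bar>s\<bar> < d" "norm e = 1" for s e
  proof
    assume "x1 + s *\<^sub>R e = 0"
    hence "x1 = - (s *\<^sub>R e)" by (simp add: eq_neg_iff_add_eq_0)
    hence "norm x1 = \<bar>s\<bar>" using that by simp
    thus False using that d by simp
  qed
  have npos: "norm (x1 + s *\<^sub>R e) > 0" if "\<bar>s\<bar> < d" "norm e = 1" for s e
    using nz[OF that] by simp
  have gder: "((\<lambda>s. \<sigma> * (G (norm (x1 + s *\<^sub>R e)) - u (x1 + s *\<^sub>R e))) has_real_derivative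
      \<sigma> * (G1 (norm (x1 + s *\<^sub>R e)) * ((x1 + s *\<^sub>R e) \<bullet> e / norm (x1 + s *\<^sub>R e)) - Du (x1 + s *\<^sub>R e) \<bullet> e)) (at s)"
    if "\<bar>s\<bar> < d" "norm e = 1" for s e
  proof -
    have a: "((\<lambda>s. G (norm (x1 + s *\<^sub>R e))) has_real_derivative
        G1 (norm (x1 + s *\<^sub>R e)) * ((x1 + s *\<^sub>R e) \<bullet> e / norm (x1 + s *\<^sub>R e))) (at s)"
      by (rule DERIV_chain2[OF _ line_norm_deriv[OF nz[OF that]]]) (use Gd npos[OF that] in blast)
    have b: "((\<lambda>s. u (x1 + s *\<^sub>R e)) has_real_derivative Du (x1 + s *\<^sub>R e) \<bullet> e) (at s)"
      by (rule line_deriv[OF ud[rule_format, OF inball[OF that]]]) (simp add: linear_iff inner_add_right)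
    show ?thesis by (intro DERIV_cmult DERIV_diff a b)
  qed
  define e0 where "e0 = x1 /\<^sub>R r"
  have e0: "norm e0 = 1" "x1 \<bullet> e0 = r" using r
    by (auto simp: e0_def r_def dot_square_norm power2_eq_square)
  have "\<sigma> * (G1 (norm (x1 + 0 *\<^sub>R e0)) * ((x1 + 0 *\<^sub>R e0) \<bullet> e0 / norm (x1 + 0 *\<^sub>R e0)) - Du (x1 + 0 *\<^sub>R e0) \<bullet> e0) = 0"
  proof (rule DERIV_local_max[OF gder[OF _ e0(1)] d(1)])
    show "\<bar>0::real\<bar> < d" using d by simp
    show "\<forall>y. \<bar>0 - y\<bar> < d \<longrightarrow> \<sigma> * (G (norm (x1 + y *\<^sub>R e0)) - u (x1 + y *\<^sub>R e0))
        \<le> \<sigma> * (G (norm (x1 + 0 *\<^sub>R e0)) - u (x1 + 0 *\<^sub>R e0))"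
      using mx inball[OF _ e0(1)] by auto
  qed
  thus "\<sigma> * (G1 (norm x1) - Du x1 \<bullet> (x1 /\<^sub>R norm x1)) = 0"
    using e0 r by (simp add: r_def e0_def)
  have each: "\<sigma> * (G2 * ((x1 $ i / r) * (x1 $ i / r)) + G1 r * ((r - x1 $ i * (x1 $ i / r)) / (r * r)) - D2 $ i $ i) \<le> 0"
    for i
  proof -
    define e where "e = (axis i 1 :: real^'n)"
    have e: "norm e = 1" "e \<bullet> e = 1" "x1 \<bullet> e = x1 $ i" "(D2 *v e) \<bullet> e = D2 $ i $ i"
      by (auto simp: e_def inner_axis matrix_vector_mult_basis column_def)
    let ?g' = "\<lambda>s. \<sigma> * (G1 (norm (x1 + s *\<^sub>R e)) * ((x1 + s *\<^sub>R e) \<bullet> e / norm (x1 + s *\<^sub>R e)) - Du (x1 + s *\<^sub>R e) \<bullet> e)"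
    have hN: "((\<lambda>s. norm (x1 + s *\<^sub>R e)) has_real_derivative (x1 \<bullet> e / r)) (at 0)"
      using line_norm_deriv[OF nz[OF _ e(1), of 0]] d by (simp add: r_def)
    have hG1N: "((\<lambda>s. G1 (norm (x1 + s *\<^sub>R e))) has_real_derivative G2 * (x1 \<bullet> e / r)) (at 0)"
      by (rule DERIV_chain2[OF _ hN]) (use G1d in \<open>simp add: r_def\<close>)
    have hnum: "((\<lambda>s. (x1 + s *\<^sub>R e) \<bullet> e) has_real_derivative e \<bullet> e) (at 0)"
      by (auto intro!: derivative_eq_intros simp: inner_add_left)
    have hQ: "((\<lambda>s. (x1 + s *\<^sub>R e) \<bullet> e / norm (x1 + s *\<^sub>R e)) has_real_derivative
        ((e \<bullet> e) * r - (x1 \<bullet> e) * (x1 \<bullet> e / r)) / (r * r)) (at 0)"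
      using DERIV_divide[OF hnum hN] r by (simp add: r_def)
    have hD: "((\<lambda>s. Du (x1 + s *\<^sub>R e) \<bullet> e) has_real_derivative (D2 *v e) \<bullet> e) (at 0)"
    proof -
      have "((\<lambda>y. Du y \<bullet> e) has_derivative (\<lambda>h. (D2 *v h) \<bullet> e)) (at (x1 + 0 *\<^sub>R e))"
        using ud2 by (auto intro!: derivative_eq_intros)
      thus ?thesis
        by (rule line_deriv) (simp add: linear_iff matrix_vector_right_distrib inner_add_left
              matrix_vector_mult_scaleR)
    qed
    have h2: "(?g' has_real_derivative \<sigma> * (G2 * (x1 \<bullet> e / r) * (x1 \<bullet> e / r) +
        ((e \<bullet> e) * r - (x1 \<bullet> e) * (x1 \<bullet> e / r)) / (r * r) * G1 r - (D2 *v e) \<bullet> e)) (at 0)"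
      using DERIV_cmult[OF DERIV_diff[OF DERIV_mult[OF hG1N hQ] hD], of \<sigma>] r
      by (simp add: r_def)
    have "\<sigma> * (G2 * (x1 \<bullet> e / r) * (x1 \<bullet> e / r) +
        ((e \<bullet> e) * r - (x1 \<bullet> e) * (x1 \<bullet> e / r)) / (r * r) * G1 r - (D2 *v e) \<bullet> e) \<le> 0"
    proof (rule second_deriv_max[OF d(1) _ h2])
      show "\<And>s. \<bar>s\<bar> < d \<Longrightarrow> ((\<lambda>s. \<sigma> * (G (norm (x1 + s *\<^sub>R e)) - u (x1 + s *\<^sub>R e))) has_real_derivative ?g' s) (at s)"
        using gder e(1) by blast
      show "\<And>s. \<bar>s\<bar> < d \<Longrightarrow> \<sigma> * (G (norm (x1 + s *\<^sub>R e)) - u (x1 + s *\<^sub>R e))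
          \<le> \<sigma> * (G (norm (x1 + 0 *\<^sub>R e)) - u (x1 + 0 *\<^sub>R e))"
        using mx inball[OF _ e(1)] by auto
    qed
    thus ?thesis using e by (simp add: algebra_simps)
  qed
  have le: "(\<Sum>i\<in>UNIV. \<sigma> * (G2 * ((x1 $ i / r) * (x1 $ i / r)) + G1 r * ((r - x1 $ i * (x1 $ i / r)) / (r * r)) - D2 $ i $ i)) \<le> 0"
    by (rule sum_nonpos) (use each in auto)
  have sq: "(\<Sum>i\<in>UNIV. x1 $ i * x1 $ i) = r * r"
  proof -
    have "r * r = x1 \<bullet> x1" by (simp add: r_def dot_square_norm power2_eq_square)
    thus ?thesis by (simp add: inner_vec_def)
  qed
  have eqn: "(\<Sum>i\<in>UNIV. \<sigma> * (G2 * ((x1 $ i / r) * (x1 $ i / r)) + G1 r * ((r - x1 $ i * (x1 $ i / r)) / (r * r)) - D2 $ i $ i))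
      = \<sigma> * (G2 / (r*r) * (\<Sum>i\<in>UNIV. x1 $ i * x1 $ i) + G1 r * (real CARD('n) / r - (\<Sum>i\<in>UNIV. x1 $ i * x1 $ i) / (r*r*r))
          - (\<Sum>i\<in>UNIV. D2 $ i $ i))"
  proof -
    have "\<And>i. \<sigma> * (G2 * ((x1 $ i / r) * (x1 $ i / r)) + G1 r * ((r - x1 $ i * (x1 $ i / r)) / (r * r)) - D2 $ i $ i)
       = (\<sigma> * G2 / (r*r)) * (x1 $ i * x1 $ i) + \<sigma> * G1 r / r - (\<sigma> * G1 r / (r*r*r)) * (x1 $ i * x1 $ i) - \<sigma> * D2 $ i $ i"
      using r by (simp add: field_simps)
    hence "(\<Sum>i\<in>UNIV. \<sigma> * (G2 * ((x1 $ i / r) * (x1 $ i / r)) + G1 r * ((r - x1 $ i * (x1 $ i / r)) / (r * r)) - D2 $ i $ i))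
      = (\<Sum>i\<in>UNIV. (\<sigma> * G2 / (r*r)) * (x1 $ i * x1 $ i) + \<sigma> * G1 r / r - (\<sigma> * G1 r / (r*r*r)) * (x1 $ i * x1 $ i) - \<sigma> * D2 $ i $ i)"
      by simp
    also have "\<dots> = (\<sigma> * G2 / (r*r)) * (\<Sum>i\<in>UNIV. x1 $ i * x1 $ i) + real CARD('n) * (\<sigma> * G1 r / r)
        - (\<sigma> * G1 r / (r*r*r)) * (\<Sum>i\<in>UNIV. x1 $ i * x1 $ i) - \<sigma> * (\<Sum>i\<in>UNIV. D2 $ i $ i)"
      by (simp add: sum_subtractf sum.distrib sum_distrib_left)
    finally show ?thesis by (simp add: algebra_simps)
  qed
  have fin: "\<sigma> * (G2 / (r * r) * (r * r) + G1 r * (real CARD('n) / r - r * r / (r * r * r)) -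
      (\<Sum>i\<in>UNIV. D2 $ i $ i)) \<le> 0" using le eqn unfolding sq by linarith
  have "\<sigma> * (G2 + (real CARD('n) - 1) / r * G1 r - (\<Sum>i\<in>UNIV. D2 $ i $ i)) =
     \<sigma> * (G2 / (r * r) * (r * r) + G1 r * (real CARD('n) / r - r * r / (r * r * r)) -
      (\<Sum>i\<in>UNIV. D2 $ i $ i))"
    using r by (simp add: field_simps)
  with fin show "\<sigma> * (G2 + (real CARD('n) - 1) / norm x1 * G1 (norm x1) - (\<Sum>i\<in>UNIV. D2 $ i $ i)) \<le> 0"
    unfolding r_def[symmetric] by linarith
qed



lemma Q_nonneg:
  fixes U a p \<psi> :: real
  assumes "U \<le> 0" "a \<le> 0" "p \<ge> 0" "\<psi> \<ge> 0"
  shows "(U - \<psi>) * (a - p)^3 - (U * a^3 - 3 * U * a^2 * p - \<psi> * a^3) \<ge> 0"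
proof -
  have e: "(U - \<psi>) * (a - p)^3 - (U * a^3 - 3 * U * a^2 * p - \<psi> * a^3)
    = 3 * (U * a) * p^2 + (-U) * p^3 + \<psi> * (3 * a^2 * p + 3 * (-a) * p^2 + p^3)"
    by (simp add: power3_eq_cube power2_eq_square algebra_simps)
  have "U * a \<ge> 0" using assms by (simp add: mult_nonpos_nonpos)
  hence t1: "3 * (U * a) * p^2 \<ge> 0" by simp
  have t2: "(-U) * p^3 \<ge> 0" using assms by (intro mult_nonneg_nonneg) auto
  have "3 * a^2 * p \<ge> 0" "p^3 \<ge> 0" using assms by auto
  moreover have "3 * (-a) * p^2 \<ge> 0" using assms by (intro mult_nonneg_nonneg) auto
  ultimately have "3 * a^2 * p + 3 * (-a) * p^2 + p^3 \<ge> 0" by linarith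
  hence t3: "\<psi> * (3 * a^2 * p + 3 * (-a) * p^2 + p^3) \<ge> 0" using assms by simp
  show ?thesis unfolding e using t1 t2 t3 by linarith
qed

lemma steady_alg:
  fixes N w \<alpha> \<rho> :: real
  assumes w: "w > 0" and rho: "\<rho> = w^3" and al: "\<alpha>^3 = 9*N - 15"
  shows "2*\<alpha>/(9* w^5) + (N-1)/\<rho> * (-\<alpha>/(3* w^2)) + (-\<alpha>* w) * (-\<alpha>/(3* w^2))^3 = 0"
proof -
  define U where "U = -\<alpha>* w"
  define a where "a = -\<alpha>/(3* w^2)"
  define U2 where "U2 = 2*\<alpha>/(9* w^5)"
  have "U2 + (N-1)/\<rho> * a + U * a^3 = 0"
  proof -
    have "U * a^3 = \<alpha> * \<alpha>^3 / (27 * w^5)"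
      using w by (simp add: U_def a_def power_divide field_simps power3_eq_cube eval_nat_numeral)
    also have "\<dots> = \<alpha> / w^5 * ((9*N-15)/27)" using al by simp
    finally have x1: "U * a^3 = \<alpha> / w^5 * ((9*N-15)/27)" .
    have x2: "(N-1)/\<rho> * a = \<alpha> / w^5 * (-(N-1)/3)"
      using w unfolding rho a_def by (simp add: field_simps eval_nat_numeral)
    have x3: "U2 = \<alpha> / w^5 * (2/9)" unfolding U2_def by simp
    have "U2 + (N-1)/\<rho> * a + U * a^3 = \<alpha> / w^5 * (2/9 + (-(N-1)/3) + (9*N-15)/27)"
      unfolding x1 x2 x3 by (simp add: algebra_simps)
    also have "\<dots> = 0" by (simp add: field_simps)
    finally show ?thesis .
  qed
  thus ?thesis unfolding U_def a_def U2_def .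
qed

lemma sub_alg:
  fixes N w q k A E \<mu> \<alpha> \<rho> :: real
  assumes w: "w > 0" and rho: "\<rho> = w^3" and q: "q > 0" and E: "E > 0"
    and al: "\<alpha>^3 = 9*N - 15" "\<alpha> > 0"
    and kq: "k^2 - (2*N-3)*k - (3*N-5)/9 = 0"
    and p1: "A*k*q/\<rho> - (k+2)*q*\<rho> \<ge> 0"
    and p0: "q * (A - \<rho>^2) \<ge> 0"
    and mu: "\<mu> * (A - \<rho>^2) < 4*k - 4*N + 10"
  shows "\<mu> * (E * (q * (A - \<rho>^2))) <
     (2*\<alpha>/(9* w^5) - E * (A*k*(k-1)*q/\<rho>^2 - (k+2)*(k+1)*q))
     + (N - 1)/\<rho> * (-\<alpha>/(3* w^2) - E * (A*k*q/\<rho> - (k+2)*q*\<rho>))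
     + (-\<alpha>* w - E * (q * (A - \<rho>^2))) * (-\<alpha>/(3* w^2) - E * (A*k*q/\<rho> - (k+2)*q*\<rho>))^3"
proof -
  define U where "U = -\<alpha>* w"
  define a where "a = -\<alpha>/(3* w^2)"
  define U2 where "U2 = 2*\<alpha>/(9* w^5)"
  define \<phi> where "\<phi> = q * (A - \<rho>^2)"
  define \<phi>1 where "\<phi>1 = A*k*q/\<rho> - (k+2)*q*\<rho>"
  define \<phi>2 where "\<phi>2 = A*k*(k-1)*q/\<rho>^2 - (k+2)*(k+1)*q"
  have rp: "\<rho> > 0" using w rho by simp
  have S1: "U2 + (N-1)/\<rho> * a + U * a^3 = 0"
  proof -
    have "U * a^3 = \<alpha> * \<alpha>^3 / (27 * w^5)"
      using w by (simp add: U_def a_def power_divide field_simps power3_eq_cube eval_nat_numeral)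
    also have "\<dots> = \<alpha> / w^5 * ((9*N-15)/27)" using al by simp
    finally have x1: "U * a^3 = \<alpha> / w^5 * ((9*N-15)/27)" .
    have x2: "(N-1)/\<rho> * a = \<alpha> / w^5 * (-(N-1)/3)"
      using w unfolding rho a_def by (simp add: field_simps eval_nat_numeral)
    have x3: "U2 = \<alpha> / w^5 * (2/9)" unfolding U2_def by simp
    have "U2 + (N-1)/\<rho> * a + U * a^3 = \<alpha> / w^5 * (2/9 + (-(N-1)/3) + (9*N-15)/27)"
      unfolding x1 x2 x3 by (simp add: algebra_simps)
    also have "\<dots> = 0" by (simp add: field_simps)
    finally show ?thesis .
  qed
  have S2: "\<phi>2 - (2*N-4)/\<rho> * \<phi>1 - (3*N-5)/(9*\<rho>^2) * \<phi> = -(4*k-4*N+10) * q"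
  proof -
    have "\<phi>2 - (2*N-4)/\<rho> * \<phi>1 - (3*N-5)/(9*\<rho>^2) * \<phi>
       = (A*q/\<rho>^2 - q) * (k^2 - (2*N-3)*k - (3*N-5)/9) - q * (4*k-4*N+10)"
      using rp unfolding \<phi>_def \<phi>1_def \<phi>2_def by (simp add: field_simps power2_eq_square)
    thus ?thesis unfolding kq by (simp add: algebra_simps)
  qed
  have S3: "3 * U * a^2 = -(3*N-5)/\<rho>" "a^3 = -(3*N-5)/(9*\<rho>^2)"
  proof -
    show "3 * U * a^2 = -(3*N-5)/\<rho>"
      using w al unfolding U_def a_def rho by (simp add: field_simps power2_eq_square power3_eq_cube)
    show "a^3 = -(3*N-5)/(9*\<rho>^2)"
      using w al unfolding a_def rho by (simp add: field_simps power2_eq_square power3_eq_cube)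
  qed
  have Un: "U \<le> 0" "a \<le> 0" using w al by (auto simp: U_def a_def)
  have pn: "E*\<phi>1 \<ge> 0" "E*\<phi> \<ge> 0" using p1 p0 E by (auto simp: \<phi>1_def \<phi>_def)
  have Q: "(U - E*\<phi>) * (a - E*\<phi>1)^3 - (U * a^3 - 3 * U * a^2 * (E*\<phi>1) - (E*\<phi>) * a^3) \<ge> 0"
    by (rule Q_nonneg[OF Un pn])
  have key: "(U2 - E*\<phi>2) + (N-1)/\<rho> * (a - E*\<phi>1) + (U - E*\<phi>) * (a - E*\<phi>1)^3 - \<mu>*(E*\<phi>)
      = (U2 + (N-1)/\<rho> * a + U * a^3)
        - E * (\<phi>2 - (2*N-4)/\<rho> * \<phi>1 - (3*N-5)/(9*\<rho>^2) * \<phi>)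
        - E * \<phi>1 * (3 * U * a^2 + (3*N-5)/\<rho>) - E * \<phi> * (a^3 + (3*N-5)/(9*\<rho>^2))
        + ((U - E*\<phi>) * (a - E*\<phi>1)^3 - (U * a^3 - 3 * U * a^2 * (E*\<phi>1) - (E*\<phi>) * a^3))
        - \<mu>*(E*\<phi>)"
    by (simp add: algebra_simps diff_divide_distrib add_divide_distrib)
  have r1: "3 * U * a^2 + (3*N-5)/\<rho> = 0" "a^3 + (3*N-5)/(9*\<rho>^2) = 0" unfolding S3 by (simp_all add: add_divide_distrib[symmetric])
  define Qv where "Qv = (U - E*\<phi>) * (a - E*\<phi>1)^3 - (U * a^3 - 3 * U * a^2 * (E*\<phi>1) - (E*\<phi>) * a^3)"
  have key2: "(U2 - E*\<phi>2) + (N-1)/\<rho> * (a - E*\<phi>1) + (U - E*\<phi>) * (a - E*\<phi>1)^3 - \<mu>*(E*\<phi>)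
      = E * q * (4*k-4*N+10) + Qv - \<mu>*(E*\<phi>)"
    unfolding key S1 S2 r1 Qv_def[symmetric] by (simp add: algebra_simps)
  have "E * q * (4*k-4*N+10 - \<mu> * (A - \<rho>^2)) > 0" using E q mu by simp
  moreover have "\<mu>*(E*\<phi>) = E * q * (\<mu> * (A - \<rho>^2))" by (simp add: \<phi>_def)
  ultimately have "(U2 - E*\<phi>2) + (N-1)/\<rho> * (a - E*\<phi>1) + (U - E*\<phi>) * (a - E*\<phi>1)^3 - \<mu>*(E*\<phi>) > 0"
    unfolding key2 using Q unfolding Qv_def[symmetric] by (simp add: algebra_simps)
  thus ?thesis unfolding U_def a_def U2_def \<phi>_def \<phi>1_def \<phi>2_def by simp
qed



lemma powr_deriv: "0 < (x::real) \<Longrightarrow> ((\<lambda>z. z powr r) has_real_derivative r * x powr (r - 1)) (at x)"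
  by (rule has_real_derivative_powr)

lemma phi_deriv:
  fixes k A x :: real assumes x: "0 < x"
  shows "((\<lambda>\<rho>. A * \<rho> powr k - \<rho> powr (k+2)) has_real_derivative
      (A * k * x powr (k-1) - (k+2) * x powr (k+1))) (at x)"
proof -
  have "((\<lambda>\<rho>. A * \<rho> powr k - \<rho> powr (k+2)) has_real_derivative
      (A * (k * x powr (k-1)) - (k+2) * x powr (k+2-1))) (at x)"
    by (intro DERIV_diff DERIV_cmult powr_deriv x)
  moreover have "k+2-1 = k+1" "k-1-1 = k-2" "k+1-1 = k" by simp_all
  ultimately show ?thesis by (simp only: mult.assoc)
qed

lemma phi1_deriv:
  fixes k A x :: real assumes x: "0 < x"
  shows "((\<lambda>\<rho>. A * k * \<rho> powr (k-1) - (k+2) * \<rho> powr (k+1)) has_real_derivative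
      (A * k * (k-1) * x powr (k-2) - (k+2) * (k+1) * x powr k)) (at x)"
proof -
  have "((\<lambda>\<rho>. A * k * \<rho> powr (k-1) - (k+2) * \<rho> powr (k+1)) has_real_derivative
      (A * k * ((k-1) * x powr (k-1-1)) - (k+2) * ((k+1) * x powr (k+1-1)))) (at x)"
    by (intro DERIV_diff DERIV_cmult powr_deriv x)
  moreover have "k+2-1 = k+1" "k-1-1 = k-2" "k+1-1 = k" by simp_all
  ultimately show ?thesis by (simp only: mult.assoc)
qed

lemma three_minus: "(3::nat) - Suc 0 = 2" by simp

lemma ustar_deriv:
  assumes x: "0 < x"
  shows "(ustar n has_real_derivative (- alpha n / (3 * (root 3 x)^2))) (at x)"
proof -
  have b: "(root 3 has_real_derivative inverse (real 3 * root 3 x ^ (3 - Suc 0))) (at x)"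
    by (rule DERIV_real_root) (use x in simp_all)
  have f1: "((\<lambda>x. - alpha n * root 3 x) has_real_derivative (- alpha n * inverse (real 3 * root 3 x ^ (3 - Suc 0)))) (at x)"
    by (rule DERIV_cmult[OF b])
  have e2: "ustar n = (\<lambda>x. - alpha n * root 3 x)" by (simp add: ustar_def[abs_def])
  have e3: "- alpha n * inverse (real 3 * root 3 x ^ (3 - Suc 0)) = - alpha n / (3 * (root 3 x)^2)"
    unfolding three_minus by (simp add: inverse_eq_divide)
  show ?thesis unfolding e2 using f1 unfolding e3 .
qed

lemma ustar1_deriv:
  assumes x: "0 < x"
  shows "((\<lambda>x. - alpha n / (3 * (root 3 x)^2)) has_real_derivative (2 * alpha n / (9 * (root 3 x)^5))) (at x)"
proof -
  define w where "w = root 3 x"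
  have w: "w > 0" using x by (simp add: w_def)
  have d: "((\<lambda>w. 3 * w^2) has_real_derivative 3 * (2 * w)) (at w)"
    using DERIV_cmult[OF DERIV_pow[of 2 w], of 3] by simp
  have a: "((\<lambda>w. - alpha n / (3 * w^2)) has_real_derivative
      ((0 * (3 * w^2) - (- alpha n) * (3 * (2 * w))) / ((3 * w^2) * (3 * w^2)))) (at w)"
    by (rule DERIV_divide[OF DERIV_const d]) (use w in simp)
  have b: "(root 3 has_real_derivative inverse (real 3 * root 3 x ^ (3 - Suc 0))) (at x)"
    by (rule DERIV_real_root) (use x in simp_all)
  have c: "((\<lambda>x. - alpha n / (3 * (root 3 x)^2)) has_real_derivative
     ((0 * (3 * (root 3 x)^2) - (- alpha n) * (3 * (2 * root 3 x))) / ((3 * (root 3 x)^2) * (3 * (root 3 x)^2)))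
       * inverse (real 3 * root 3 x ^ (3 - Suc 0))) (at x)"
    by (rule DERIV_chain2[OF a[unfolded w_def] b])
  have e: "((0 * (3 * w^2) - (- alpha n) * (3 * (2 * w))) / ((3 * w^2) * (3 * w^2)))
       * inverse (real 3 * w ^ (3 - Suc 0)) = 2 * alpha n / (9 * w^5)"
    unfolding three_minus using w by (simp add: inverse_eq_divide power2_eq_square field_simps eval_nat_numeral)
  show ?thesis using c unfolding e[unfolded w_def] .
qed



lemma max_principle:
  fixes w :: "real^'n \<Rightarrow> real \<Rightarrow> real"
  assumes R: "R > 0"
    and cont: "continuous_on (cball 0 R \<times> {0..}) (\<lambda>(x,t). w x t)"
    and init: "\<forall>x\<in>cball 0 R. w x 0 \<le> 0"
    and orig: "\<forall>t>0. w 0 t \<le> 0"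
    and bdry: "\<forall>t>0. \<forall>x. norm x = R \<longrightarrow> w x t \<le> 0"
    and loc: "\<And>x1 t1. x1 \<in> ball 0 R \<Longrightarrow> x1 \<noteq> 0 \<Longrightarrow> t1 > 0 \<Longrightarrow> w x1 t1 > 0 \<Longrightarrow>
       (\<forall>y\<in>cball 0 R. \<forall>s\<in>{0..t1}. w y s \<le> w x1 t1) \<Longrightarrow> False"
  shows "\<forall>x\<in>cball 0 R. \<forall>t\<ge>0. w x t \<le> 0"
proof (intro ballI allI impI, rule ccontr)
  fix x0 t0 assume x0: "x0 \<in> cball 0 R" and t0: "t0 \<ge> 0" and neg: "\<not> w x0 t0 \<le> 0"
  define K where "K = cball (0::real^'n) R \<times> {0..t0}"
  have K: "compact K" "K \<noteq> {}" using x0 t0 R by (auto simp: K_def intro!: compact_Times)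
  have "continuous_on K (\<lambda>(x,t). w x t)"
    by (rule continuous_on_subset[OF cont]) (auto simp: K_def)
  then obtain p where p: "p \<in> K" "\<forall>q\<in>K. (\<lambda>(x,t). w x t) q \<le> (\<lambda>(x,t). w x t) p"
    using continuous_attains_sup[OF K] by blast
  obtain x1 t1 where p1: "p = (x1, t1)" by (cases p)
  have x1: "x1 \<in> cball 0 R" and t1: "0 \<le> t1" "t1 \<le> t0" using p(1) by (auto simp: p1 K_def)
  have mx: "\<forall>y\<in>cball 0 R. \<forall>s\<in>{0..t0}. w y s \<le> w x1 t1" using p(2) by (auto simp: p1 K_def)
  have "w x0 t0 \<le> w x1 t1" using mx x0 t0 by auto
  hence pos: "w x1 t1 > 0" using neg by simp
  have "t1 \<noteq> 0" using init x1 pos by force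
  hence t1p: "t1 > 0" using t1 by simp
  have "x1 \<noteq> 0" using orig t1p pos by auto
  moreover have "norm x1 \<noteq> R" using bdry t1p pos by force
  hence "x1 \<in> ball 0 R" using x1 by auto
  ultimately show False using loc[of x1 t1] t1p pos mx t1 by auto
qed



lemma time_max:
  fixes f :: "real \<Rightarrow> real"
  assumes "(f has_real_derivative D) (at t1)" "t1 > 0" "\<forall>s\<in>{0..t1}. f s \<le> f t1"
  shows "D \<ge> 0"
proof (rule ccontr)
  assume "\<not> D \<ge> 0" hence "D < 0" by simp
  from DERIV_neg_dec_left[OF assms(1) this] obtain d where d: "d > 0" "\<forall>h>0. h < d \<longrightarrow> f t1 < f (t1 - h)"
    by blast
  define h where "h = min d t1 / 2"
  have h: "h > 0" "h < d" "h < t1" using d assms(2) by (auto simp: h_def)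
  have "f t1 < f (t1 - h)" using d h by auto
  moreover have "f (t1 - h) \<le> f t1" using assms(3) h by auto
  ultimately show False by simp
qed

lemma cont_zero:
  fixes u :: "real^'n \<Rightarrow> real \<Rightarrow> real"
  assumes cont: "continuous_on (cball 0 R \<times> {0..}) (\<lambda>(x,t). u x t)" and R: "R > 0"
    and z: "\<forall>t>0. u 0 t = 0"
  shows "u 0 0 = 0"
proof -
  have "continuous_on {0..} (\<lambda>t. u 0 t)"
  proof -
    have "continuous_on {0..} ((\<lambda>(x,t). u x t) \<circ> (\<lambda>t. (0::real^'n, t)))"
      by (rule continuous_on_compose[OF _ continuous_on_subset[OF cont]]) (use R in \<open>auto intro!: continuous_intros\<close>)
    thus ?thesis by (simp add: o_def)
  qed
  hence "((\<lambda>t. u 0 t) \<longlongrightarrow> u 0 0) (at 0 within {0..})"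
    by (simp add: continuous_on_def)
  hence l: "((\<lambda>t. u 0 t) \<longlongrightarrow> u 0 0) (at_right 0)" by (simp add: at_within_Ici_at_right)
  have "eventually (\<lambda>t. u 0 t = 0) (at_right (0::real))"
    using z by (auto simp: eventually_at_right_less eventually_at_filter)
  hence "((\<lambda>t. 0) \<longlongrightarrow> u 0 0) (at_right (0::real))"
    using l by (rule Lim_transform_eventually[rotated])
  thus ?thesis using tendsto_const tendsto_unique trivial_limit_at_right_real by metis
qed



theorem theorem3:
  fixes u0 :: "real^'n \<Rightarrow> real"
    and Du0 :: "real^'n \<Rightarrow> real^'n"
    and D2u0 :: "real^'n \<Rightarrow> real^'n^'n"
    and u :: "real^'n \<Rightarrow> real \<Rightarrow> real"
    and Du :: "real^'n \<Rightarrow> real \<Rightarrow> real^'n"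
    and D2u :: "real^'n \<Rightarrow> real \<Rightarrow> real^'n^'n"
    and ut :: "real^'n \<Rightarrow> real \<Rightarrow> real"
    and R :: real
  assumes dim: "CARD('n) \<ge> 2"
    and R_pos: "0 < R"
    and R_small: "R < sqrt (3/8 * (3 * real CARD('n) - 5) * (2 * real CARD('n) - 3)^3)"
    \<comment> \<open>(C1): u0 is C^2 on the closed ball minus the origin\<close>
    and C1_cont: "continuous_on (cball 0 R - {0}) u0"
    and C1_cont1: "continuous_on (cball 0 R - {0}) Du0"
    and C1_cont2: "continuous_on (cball 0 R - {0}) D2u0"
    and C1_d1: "\<forall>x\<in>ball 0 R - {0}. (u0 has_derivative (\<lambda>h. Du0 x \<bullet> h)) (at x)"
    and C1_d2: "\<forall>x\<in>ball 0 R - {0}. (Du0 has_derivative (\<lambda>h. D2u0 x *v h)) (at x)"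
    \<comment> \<open>(C2): radial symmetry\<close>
    and C2: "\<forall>x\<in>cball 0 R. \<forall>y\<in>cball 0 R. norm x = norm y \<longrightarrow> u0 x = u0 y"
    \<comment> \<open>(C3)\<close>
    and C3: "\<forall>x\<in>cball 0 R. u0 x \<le> ustar CARD('n) (norm x)"
    \<comment> \<open>(C4): the limsup as r -> 0 is finite\<close>
    and C4: "\<exists>M. \<forall>\<^sub>F x in at (0::real^'n).
               \<bar>norm x powr (3/2 - real CARD('n) - nu CARD('n)) * (ustar CARD('n) (norm x) - u0 x)\<bar> \<le> M"
    \<comment> \<open>(C5)\<close>
    and C5: "\<forall>x. norm x = R \<longrightarrow> u0 x = ustar CARD('n) R"
    \<comment> \<open>(C6): bounds on the radial derivative\<close>
    and C6: "\<exists>C>0. \<forall>x. 0 < norm x \<and> norm x < R \<longrightarrow>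
               Du0 x \<bullet> (x /\<^sub>R norm x) \<le> 0 \<and> Du0 x \<bullet> (x /\<^sub>R norm x) \<ge> - C * norm x powr (-2/3)"
    \<comment> \<open>u is the classical solution of the problem\<close>
    and u_cont: "continuous_on (cball 0 R \<times> {0..}) (\<lambda>(x, t). u x t)"
    and u_diff: "\<forall>x t. x \<in> ball 0 R - {0} \<and> t > 0 \<longrightarrow>
               ((\<lambda>y. u y t) has_derivative (\<lambda>h. Du x t \<bullet> h)) (at x) \<and>
               ((\<lambda>y. Du y t) has_derivative (\<lambda>h. D2u x t *v h)) (at x) \<and>
               ((\<lambda>s. u x s) has_real_derivative ut x t) (at t)"
    and u_cont1: "continuous_on ((ball 0 R - {0}) \<times> {0<..}) (\<lambda>(x, t). Du x t)"
    and u_cont2: "continuous_on ((ball 0 R - {0}) \<times> {0<..}) (\<lambda>(x, t). D2u x t)"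
    and u_contt: "continuous_on ((ball 0 R - {0}) \<times> {0<..}) (\<lambda>(x, t). ut x t)"
    and pde: "\<forall>x t. x \<in> ball 0 R - {0} \<and> t > 0 \<longrightarrow>
               ut x t = (\<Sum>i\<in>UNIV. D2u x t $ i $ i) + u x t * (Du x t \<bullet> (x /\<^sub>R norm x)) ^ 3"
    and bc0: "\<forall>t>0. u 0 t = 0"
    and bcR: "\<forall>t>0. \<forall>x. norm x = R \<longrightarrow> u x t = ustar CARD('n) R"
    and ic: "\<forall>x\<in>cball 0 R. u x 0 = u0 x"
    and u_r_nonpos: "\<forall>x t. x \<in> ball 0 R - {0} \<and> t > 0 \<longrightarrow> Du x t \<bullet> (x /\<^sub>R norm x) \<le> 0"
  shows "uniform_limit (ball 0 R) (\<lambda>t x. u x t) (\<lambda>x. ustar CARD('n) (norm x)) at_top \<and>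
         (\<exists>c>0. \<exists>\<mu>>0. \<forall>t\<ge>0. \<forall>x\<in>ball 0 R. \<bar>u x t - ustar CARD('n) (norm x)\<bar> \<le> c * exp (- \<mu> * t))"
proof -
  define nn where "nn = CARD('n)"
  define N where "N = real nn"
  have N2: "N \<ge> 2" using dim by (simp add: N_def nn_def)
  define \<alpha> where "\<alpha> = alpha nn"
  have al3: "\<alpha>^3 = 9*N - 15" unfolding \<alpha>_def alpha_def N_def by (simp add: odd_real_root_pow)
  have alp: "\<alpha> > 0" unfolding \<alpha>_def alpha_def using N2 by (simp add: N_def)
  define \<nu> where "\<nu> = nu nn"
  have rad: "36 * N^2 - 96 * N + 61 \<ge> 0"
  proof -
    define M where "M = N - 2"
    have M: "M \<ge> 0" "M * M \<ge> 0" using N2 by (auto simp: M_def)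
    have "36 * N^2 - 96 * N + 61 = 36 * (M * M) + 48 * M + 13" by (simp add: M_def power2_eq_square algebra_simps)
    thus ?thesis using M by linarith
  qed
  have nu0: "\<nu> \<ge> 0" unfolding \<nu>_def nu_def N_def[symmetric] using rad by simp
  have nu2: "\<nu>^2 = (36 * N^2 - 96 * N + 61) / 36"
    unfolding \<nu>_def nu_def N_def[symmetric] using rad by (simp add: power_divide)
  define k where "k = N - 3/2 + \<nu>"
  have kpos: "k > 0" using N2 nu0 by (simp add: k_def)
  have kq: "k^2 - (2*N-3)*k - (3*N-5)/9 = 0"
  proof -
    have "k^2 - (2*N-3)*k - (3*N-5)/9 = \<nu>^2 - (36 * N^2 - 96 * N + 61) / 36"
      unfolding k_def by (simp add: power2_eq_square field_simps)
    thus ?thesis using nu2 by simp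
  qed
  have kexp: "3/2 - real CARD('n) - nu CARD('n) = - k"
    unfolding k_def \<nu>_def N_def nn_def by simp
  define A where "A = (k+2)/k * R^2"
  have AR: "A > R^2" using kpos R_pos by (simp add: A_def field_simps)
  have Apos: "A > 0" using AR R_pos by (smt (verit) zero_less_power)
  define \<mu> where "\<mu> = 1 / A"
  have mupos: "\<mu> > 0" using Apos by (simp add: \<mu>_def)
  define \<phi> where "\<phi> = (\<lambda>\<rho>::real. A * \<rho> powr k - \<rho> powr (k+2))"
  define \<phi>1 where "\<phi>1 = (\<lambda>\<rho>::real. A * k * \<rho> powr (k-1) - (k+2) * \<rho> powr (k+1))"
  define \<phi>2 where "\<phi>2 = (\<lambda>\<rho>::real. A * k * (k-1) * \<rho> powr (k-2) - (k+2) * (k+1) * \<rho> powr k)"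
  define U1 where "U1 = (\<lambda>\<rho>. - \<alpha> / (3 * (root 3 \<rho>)^2))"
  define U2 where "U2 = (\<lambda>\<rho>. 2 * \<alpha> / (9 * (root 3 \<rho>)^5))"
  have phiform: "\<phi> \<rho> = \<rho> powr k * (A - \<rho>^2)" "\<phi>1 \<rho> = A*k*(\<rho> powr k)/\<rho> - (k+2)*(\<rho> powr k)*\<rho>"
     "\<phi>2 \<rho> = A*k*(k-1)*(\<rho> powr k)/\<rho>^2 - (k+2)*(k+1)*(\<rho> powr k)" if "\<rho> > 0" for \<rho>
  proof -
    have p2: "\<rho> powr (k+2) = \<rho> powr k * \<rho>^2" using that by (simp add: powr_add powr_realpow[of \<rho> 2, simplified])
    have p1: "\<rho> powr (k+1) = \<rho> powr k * \<rho>" using that by (simp add: powr_add)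
    have m1: "\<rho> powr (k-1) = \<rho> powr k / \<rho>" using that by (simp add: powr_diff)
    have m2: "\<rho> powr (k-2) = \<rho> powr k / \<rho>^2" using that by (simp add: powr_diff powr_realpow[of \<rho> 2, simplified])
    show "\<phi> \<rho> = \<rho> powr k * (A - \<rho>^2)" unfolding \<phi>_def p2 by (simp add: algebra_simps)
    show "\<phi>1 \<rho> = A*k*(\<rho> powr k)/\<rho> - (k+2)*(\<rho> powr k)*\<rho>" unfolding \<phi>1_def p1 m1 by (simp add: algebra_simps)
    show "\<phi>2 \<rho> = A*k*(k-1)*(\<rho> powr k)/\<rho>^2 - (k+2)*(k+1)*(\<rho> powr k)" unfolding \<phi>2_def m2 by (simp add: algebra_simps)
  qed
  have phi0: "\<phi> 0 = 0" unfolding \<phi>_def by simp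
  have phi_nonneg: "\<phi> \<rho> \<ge> 0" if "0 \<le> \<rho>" "\<rho> \<le> R" for \<rho>
  proof (cases "\<rho> = 0")
    case True thus ?thesis by (simp add: phi0)
  next
    case False
    hence "\<rho> > 0" using that by simp
    moreover have "\<rho>^2 \<le> R^2" using that by (simp add: power_mono)
    ultimately show ?thesis using AR by (simp add: phiform)
  qed
  have phi_lb: "\<phi> \<rho> \<ge> \<rho> powr k * (A - R^2)" if "0 < \<rho>" "\<rho> \<le> R" for \<rho>
  proof -
    have "\<rho>^2 \<le> R^2" using that by (simp add: power_mono)
    thus ?thesis using that by (simp add: phiform mult_left_mono)
  qed
  have phi_ub: "\<phi> \<rho> \<le> A * R powr k" if "0 \<le> \<rho>" "\<rho> \<le> R" for \<rho>
  proof (cases "\<rho> = 0")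
    case True thus ?thesis using Apos R_pos by (simp add: phi0)
  next
    case False
    hence rp: "\<rho> > 0" using that by simp
    have "\<rho> powr k \<le> R powr k" using that kpos by (simp add: powr_mono2)
    hence "\<rho> powr k * (A - \<rho>^2) \<le> R powr k * A" using Apos rp
      by (smt (verit) mult_left_mono powr_ge_zero zero_le_power2 mult_right_mono)
    thus ?thesis using rp by (simp add: phiform mult.commute)
  qed
  have phi1_nonneg: "\<phi>1 \<rho> \<ge> 0" if "0 < \<rho>" "\<rho> < R" for \<rho>
  proof -
    have "\<rho>^2 \<le> R^2" using that by (simp add: power_mono)
    hence "A * k - (k+2) * \<rho>^2 \<ge> 0" using kpos unfolding A_def by (simp add: mult_left_mono)
    hence "\<rho> powr k / \<rho> * (A * k - (k+2) * \<rho>^2) \<ge> 0" using that by simp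
    moreover have "\<rho> powr k / \<rho> * (A * k - (k+2) * \<rho>^2) = \<phi>1 \<rho>"
      using that by (simp add: phiform power2_eq_square field_simps)
    ultimately show ?thesis by simp
  qed
  have phi_cont: "continuous_on {0..} \<phi>"
    unfolding \<phi>_def using kpos by (auto intro!: continuous_intros continuous_on_powr')
  have dphi: "(\<phi> has_real_derivative \<phi>1 \<rho>) (at \<rho>)" if "\<rho> > 0" for \<rho>
    unfolding \<phi>_def \<phi>1_def by (rule phi_deriv[OF that])
  have dphi1: "(\<phi>1 has_real_derivative \<phi>2 \<rho>) (at \<rho>)" if "\<rho> > 0" for \<rho>
    unfolding \<phi>1_def \<phi>2_def by (rule phi1_deriv[OF that])
  have dU: "(ustar nn has_real_derivative U1 \<rho>) (at \<rho>)" if "\<rho> > 0" for \<rho>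
    unfolding U1_def \<alpha>_def by (rule ustar_deriv[OF that])
  have dU1: "(U1 has_real_derivative U2 \<rho>) (at \<rho>)" if "\<rho> > 0" for \<rho>
    unfolding U1_def U2_def \<alpha>_def by (rule ustar1_deriv[OF that])
  have ustar0: "ustar nn 0 = 0" by (simp add: ustar_def)
  have ustar_cont: "continuous_on UNIV (ustar nn)"
    unfolding ustar_def by (auto intro!: continuous_intros continuous_on_real_root)
  have ustar_n: "ustar nn \<rho> = - \<alpha> * root 3 \<rho>" for \<rho> by (simp add: ustar_def \<alpha>_def)
  have steady: "U2 \<rho> + (N-1)/\<rho> * U1 \<rho> + ustar nn \<rho> * (U1 \<rho>)^3 = 0" if "\<rho> > 0" for \<rho>
  proof -
    have "\<rho> = (root 3 \<rho>)^3" by (simp add: odd_real_root_pow)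
    from steady_alg[OF _ this al3] that show ?thesis unfolding U1_def U2_def ustar_n by simp
  qed
  have U1neg: "U1 \<rho> < 0" if "\<rho> > 0" for \<rho> using that alp by (simp add: U1_def)
  have CN: "real CARD('n) = N" by (simp add: N_def nn_def)
  have geo: "0 < min (norm x1) (R - norm x1)" "min (norm x1) (R - norm x1) \<le> norm x1"
     "ball x1 (min (norm x1) (R - norm x1)) \<subseteq> ball 0 R - {0}"
    if "x1 \<in> ball 0 R" "x1 \<noteq> 0" for x1 :: "real^'n"
  proof -
    show "0 < min (norm x1) (R - norm x1)" using that by auto
    show "min (norm x1) (R - norm x1) \<le> norm x1" by simp
    show "ball x1 (min (norm x1) (R - norm x1)) \<subseteq> ball 0 R - {0}"
    proof
      fix y assume y: "y \<in> ball x1 (min (norm x1) (R - norm x1))"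
      hence dy: "norm (x1 - y) < norm x1" "norm (x1 - y) < R - norm x1" by (auto simp: dist_norm)
      have "norm y \<le> norm x1 + norm (x1 - y)" using norm_triangle_ineq4[of x1 "x1 - y"] by simp
      hence "norm y < R" using dy by simp
      moreover have "norm x1 \<le> norm y + norm (x1 - y)" by (rule norm_triangle_sub)
      hence "y \<noteq> 0" using dy by auto
      ultimately show "y \<in> ball 0 R - {0}" by auto
    qed
  qed
  have upper: "\<forall>x\<in>cball 0 R. \<forall>t\<ge>0. u x t - ustar nn (norm x) \<le> 0"
  proof (rule max_principle[OF R_pos])
    have c1: "continuous_on UNIV (\<lambda>p::((real^'n) \<times> real). ustar nn (norm (fst p)))"
      by (rule continuous_on_compose2[OF ustar_cont]) (auto intro!: continuous_intros)
    have "continuous_on (cball 0 R \<times> {0..}) (\<lambda>p. (\<lambda>(x,t). u x t) p - ustar nn (norm (fst p)))"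
      by (intro continuous_on_diff u_cont continuous_on_subset[OF c1]) auto
    thus "continuous_on (cball 0 R \<times> {0..}) (\<lambda>(x,t). u x t - ustar nn (norm x))"
      by (simp add: case_prod_beta)
    show "\<forall>x\<in>cball 0 R. u x 0 - ustar nn (norm x) \<le> 0" using ic C3 by (simp add: nn_def)
    show "\<forall>t>0. u 0 t - ustar nn (norm (0::real^'n)) \<le> 0" using bc0 ustar0 by simp
    show "\<forall>t>0. \<forall>x. norm x = R \<longrightarrow> u x t - ustar nn (norm x) \<le> 0" using bcR by (simp add: nn_def)
  next
    fix x1 :: "real^'n" and t1 :: real
    assume x1: "x1 \<in> ball 0 R" "x1 \<noteq> 0" and t1: "t1 > 0" and pos: "u x1 t1 - ustar nn (norm x1) > 0"
      and mx: "\<forall>y\<in>cball 0 R. \<forall>s\<in>{0..t1}. u y s - ustar nn (norm y) \<le> u x1 t1 - ustar nn (norm x1)"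
    define r where "r = norm x1"
    have r: "r > 0" using x1 by (simp add: r_def)
    define d where "d = min (norm x1) (R - norm x1)"
    note g = geo[OF x1, folded d_def]
    have ud: "\<forall>y\<in>ball x1 d. ((\<lambda>y. u y t1) has_derivative (\<lambda>h. Du y t1 \<bullet> h)) (at y)"
      using u_diff g(3) t1 by blast
    have ud2: "((\<lambda>y. Du y t1) has_derivative (\<lambda>h. D2u x1 t1 *v h)) (at x1)"
      using u_diff x1 t1 by blast
    have mxs: "\<forall>y\<in>ball x1 d. (-1) * (ustar nn (norm y) - u y t1) \<le> (-1) * (ustar nn (norm x1) - u x1 t1)"
      using mx g(3) t1 by fastforce
    have rn: "norm x1 > 0" using x1 by simp
    note sp = spatial_max[OF x1(2) g(1) g(2) ud ud2 _ dU1[OF rn] mxs]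
    have sp1: "U1 r = Du x1 t1 \<bullet> (x1 /\<^sub>R norm x1)" using sp(1) dU by (simp add: r_def)
    have sp2: "(\<Sum>i\<in>UNIV. D2u x1 t1 $ i $ i) \<le> U2 r + (N - 1) / r * U1 r" using sp(2) dU by (simp add: r_def CN)
    have "((\<lambda>s. u x1 s - ustar nn (norm x1)) has_real_derivative ut x1 t1 - 0) (at t1)"
      using u_diff x1 t1 by (intro DERIV_diff DERIV_const) blast
    hence ut0: "ut x1 t1 \<ge> 0"
      using time_max[OF _ t1] mx x1 by fastforce
    have pde1: "ut x1 t1 = (\<Sum>i\<in>UNIV. D2u x1 t1 $ i $ i) + u x1 t1 * (U1 r)^3"
      using pde x1 t1 sp1 by simp
    have "ut x1 t1 \<le> (u x1 t1 - ustar nn r) * (U1 r)^3"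
      using pde1 sp2 steady[OF r] by (simp add: algebra_simps)
    moreover have "(u x1 t1 - ustar nn r) * (U1 r)^3 < 0"
      using pos U1neg[OF r] by (simp add: r_def mult_pos_neg power_odd_eq)
    ultimately show False using ut0 by simp
  qed
  have u00: "u0 0 = 0" using cont_zero[OF u_cont R_pos bc0] ic R_pos by simp
  obtain c where cpos: "c > 0" and cbd: "\<forall>x\<in>cball 0 R. ustar nn (norm x) - u0 x \<le> c * \<phi> (norm x)"
  proof -
    define f where "f = (\<lambda>x::real^'n. ustar nn (norm x) - u0 x)"
    obtain M where M: "\<forall>\<^sub>F x in at (0::real^'n). \<bar>norm x powr (- k) * f x\<bar> \<le> M"
      using C4 unfolding kexp f_def nn_def by blast
    then obtain \<delta>0 where d0: "\<delta>0 > 0" "\<forall>x. x \<noteq> 0 \<and> dist x 0 < \<delta>0 \<longrightarrow> \<bar>norm x powr (- k) * f x\<bar> \<le> M"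
      unfolding eventually_at by auto
    define \<delta> where "\<delta> = min \<delta>0 R / 2"
    have m: "min \<delta>0 R > 0" "min \<delta>0 R \<le> \<delta>0" "min \<delta>0 R \<le> R" using d0 R_pos by simp_all
    have dl: "\<delta> > 0" "\<delta> < \<delta>0" "\<delta> < R" using m unfolding \<delta>_def by linarith+
    define K where "K = cball (0::real^'n) R - ball 0 \<delta>"
    have Kc: "compact K" unfolding K_def by (intro compact_diff compact_cball open_ball)
    have KS: "K \<subseteq> cball 0 R - {0}" using dl by (auto simp: K_def)
    have fc: "continuous_on K f"
    proof -
      have "continuous_on UNIV (\<lambda>x::real^'n. ustar nn (norm x))"
        by (rule continuous_on_compose2[OF ustar_cont]) (auto intro!: continuous_intros)
      thus ?thesis unfolding f_def
        by (intro continuous_on_diff continuous_on_subset[OF C1_cont KS]) (auto intro: continuous_on_subset)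
    qed
    have "bounded (f ` K)" by (rule compact_imp_bounded[OF compact_continuous_image[OF fc Kc]])
    then obtain B where B: "\<forall>x\<in>K. \<bar>f x\<bar> \<le> B" unfolding bounded_real by auto
    have dk: "\<delta> powr k > 0" using dl by simp
    define c where "c = (\<bar>M\<bar> + \<bar>B\<bar> / \<delta> powr k + 1) / (A - R^2)"
    have "\<bar>B\<bar> / \<delta> powr k \<ge> 0" using dk by simp
    hence "\<bar>M\<bar> + \<bar>B\<bar> / \<delta> powr k + 1 > 0" by (smt (verit) abs_ge_zero)
    hence cpos: "c > 0" using AR unfolding c_def by (simp add: divide_pos_pos)
    have main: "f x \<le> (\<bar>M\<bar> + \<bar>B\<bar> / \<delta> powr k) * norm x powr k" if "x \<in> cball 0 R" "x \<noteq> 0" for x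
    proof (cases "norm x < \<delta>")
      case True
      have rp: "norm x > 0" using that by simp
      have "\<bar>norm x powr (- k) * f x\<bar> \<le> M" using d0(2) that True dl by (simp add: dist_norm)
      hence "norm x powr (- k) * f x \<le> \<bar>M\<bar>" by simp
      hence h1: "norm x powr k * (norm x powr (- k) * f x) \<le> norm x powr k * \<bar>M\<bar>"
        by (simp add: mult_left_mono)
      have h2: "norm x powr k * (norm x powr (- k) * f x) = f x"
        using rp by (simp add: powr_minus field_simps)
      have h3: "\<bar>B\<bar> / \<delta> powr k * norm x powr k \<ge> 0" by simp
      have e1: "f x \<le> norm x powr k * \<bar>M\<bar>" using h1 unfolding h2 .
      have e2: "(\<bar>M\<bar> + \<bar>B\<bar> / \<delta> powr k) * norm x powr k = norm x powr k * \<bar>M\<bar> + \<bar>B\<bar> / \<delta> powr k * norm x powr k"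
        by (simp add: algebra_simps)
      show ?thesis unfolding e2 using e1 h3 by linarith
    next
      case False
      hence xK: "x \<in> K" using that by (auto simp: K_def)
      have "norm x powr k \<ge> \<delta> powr k" using False dl kpos by (simp add: powr_mono2)
      hence "\<bar>B\<bar> / \<delta> powr k * norm x powr k \<ge> \<bar>B\<bar> / \<delta> powr k * \<delta> powr k"
        using dk by (intro mult_left_mono) simp_all
      moreover have "\<bar>B\<bar> / \<delta> powr k * \<delta> powr k = \<bar>B\<bar>" using dk by simp
      ultimately have "\<bar>B\<bar> / \<delta> powr k * norm x powr k \<ge> \<bar>B\<bar>" by simp
      moreover have "f x \<le> \<bar>B\<bar>" using B xK by fastforce
      moreover have "\<bar>M\<bar> * norm x powr k \<ge> 0" by simp
      moreover have e2: "(\<bar>M\<bar> + \<bar>B\<bar> / \<delta> powr k) * norm x powr k = \<bar>M\<bar> * norm x powr k + \<bar>B\<bar> / \<delta> powr k * norm x powr k"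
        by (simp add: algebra_simps)
      ultimately show ?thesis by linarith
    qed
    show ?thesis
    proof (rule that[OF cpos], intro ballI)
      fix x :: "real^'n" assume x: "x \<in> cball 0 R"
      show "ustar nn (norm x) - u0 x \<le> c * \<phi> (norm x)"
      proof (cases "x = 0")
        case True thus ?thesis using u00 ustar0 phi0 by simp
      next
        case False
        have rp: "norm x > 0" "norm x \<le> R" using False x by auto
        have "f x \<le> (\<bar>M\<bar> + \<bar>B\<bar> / \<delta> powr k) * norm x powr k" by (rule main[OF x False])
        also have "\<dots> \<le> (\<bar>M\<bar> + \<bar>B\<bar> / \<delta> powr k + 1) * norm x powr k" by (intro mult_right_mono) simp_all
        also have "\<dots> = c * (norm x powr k * (A - R^2))"
        proof -
          have "c * (A - R^2) = \<bar>M\<bar> + \<bar>B\<bar> / \<delta> powr k + 1" using AR by (simp add: c_def)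
          thus ?thesis by (metis mult.assoc mult.commute)
        qed
        also have "\<dots> \<le> c * \<phi> (norm x)" using phi_lb[OF rp] cpos by (simp add: mult_left_mono)
        finally show ?thesis by (simp add: f_def)
      qed
    qed
  qed
  define V where "V = (\<lambda>t \<rho>. ustar nn \<rho> - c * exp (- \<mu> * t) * \<phi> \<rho>)"
  have lower: "\<forall>x\<in>cball 0 R. \<forall>t\<ge>0. V t (norm x) - u x t \<le> 0"
  proof (rule max_principle[OF R_pos])
    have c1: "continuous_on UNIV (\<lambda>p::((real^'n) \<times> real). ustar nn (norm (fst p)))"
      by (rule continuous_on_compose2[OF ustar_cont]) (auto intro!: continuous_intros)
    have c2: "continuous_on (cball 0 R \<times> {0..}) (\<lambda>p::((real^'n) \<times> real). \<phi> (norm (fst p)))"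
      by (rule continuous_on_compose2[OF phi_cont]) (auto intro!: continuous_intros)
    have "continuous_on (cball 0 R \<times> {0..}) (\<lambda>p. ustar nn (norm (fst p)) - c * exp (- \<mu> * snd p) * \<phi> (norm (fst p)) - (\<lambda>(x,t). u x t) p)"
      by (intro continuous_on_diff u_cont continuous_on_subset[OF c1] continuous_on_mult c2
          continuous_intros) auto
    thus "continuous_on (cball 0 R \<times> {0..}) (\<lambda>(x,t). V t (norm x) - u x t)"
      by (simp add: case_prod_beta V_def)
    show "\<forall>x\<in>cball 0 R. V 0 (norm x) - u x 0 \<le> 0" using ic cbd by (force simp: V_def)
    show "\<forall>t>0. V t (norm (0::real^'n)) - u 0 t \<le> 0" using bc0 ustar0 phi0 by (simp add: V_def)
    show "\<forall>t>0. \<forall>x. norm x = R \<longrightarrow> V t (norm x) - u x t \<le> 0"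
    proof (intro allI impI)
      fix t :: real and x :: "real^'n" assume t: "t > 0" and x: "norm x = R"
      have "c * exp (- \<mu> * t) * \<phi> R \<ge> 0" using phi_nonneg[of R] R_pos cpos by simp
      thus "V t (norm x) - u x t \<le> 0" using bcR t x by (simp add: V_def nn_def)
    qed
  next
    fix x1 :: "real^'n" and t1 :: real
    assume x1: "x1 \<in> ball 0 R" "x1 \<noteq> 0" and t1: "t1 > 0" and pos: "V t1 (norm x1) - u x1 t1 > 0"
      and mx: "\<forall>y\<in>cball 0 R. \<forall>s\<in>{0..t1}. V s (norm y) - u y s \<le> V t1 (norm x1) - u x1 t1"
    define r where "r = norm x1"
    have r: "r > 0" "r < R" using x1 by (auto simp: r_def)
    define d where "d = min (norm x1) (R - norm x1)"
    note g = geo[OF x1, folded d_def]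
    define E where "E = c * exp (- \<mu> * t1)"
    have Epos: "E > 0" using cpos by (simp add: E_def)
    define G where "G = (\<lambda>\<rho>. ustar nn \<rho> - E * \<phi> \<rho>)"
    define G1 where "G1 = (\<lambda>\<rho>. U1 \<rho> - E * \<phi>1 \<rho>)"
    have GV: "G \<rho> = V t1 \<rho>" for \<rho> by (simp add: G_def V_def E_def)
    have Gd: "\<forall>\<rho>>0. (G has_real_derivative G1 \<rho>) (at \<rho>)"
      unfolding G_def G1_def using dU dphi by (auto intro!: DERIV_diff DERIV_cmult)
    have G1d: "(G1 has_real_derivative (U2 r - E * \<phi>2 r)) (at (norm x1))"
      unfolding G1_def using dU1[OF r(1)] dphi1[OF r(1)] by (auto intro!: DERIV_diff DERIV_cmult simp: r_def)
    have ud: "\<forall>y\<in>ball x1 d. ((\<lambda>y. u y t1) has_derivative (\<lambda>h. Du y t1 \<bullet> h)) (at y)"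
      using u_diff g(3) t1 by blast
    have ud2: "((\<lambda>y. Du y t1) has_derivative (\<lambda>h. D2u x1 t1 *v h)) (at x1)"
      using u_diff x1 t1 by blast
    have mxs: "\<forall>y\<in>ball x1 d. 1 * (G (norm y) - u y t1) \<le> 1 * (G (norm x1) - u x1 t1)"
      using mx g(3) t1 unfolding GV by fastforce
    note sp = spatial_max[OF x1(2) g(1) g(2) ud ud2 Gd G1d mxs]
    define b where "b = Du x1 t1 \<bullet> (x1 /\<^sub>R norm x1)"
    have sp1: "G1 r = b" using sp(1) by (simp add: r_def b_def)
    have sp2: "U2 r - E * \<phi>2 r + (N - 1) / r * G1 r \<le> (\<Sum>i\<in>UNIV. D2u x1 t1 $ i $ i)"
      using sp(2) by (simp add: r_def CN)
    have bneg: "b \<le> 0" using u_r_nonpos x1 t1 by (simp add: b_def)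
    have dexp: "((\<lambda>s. exp (- \<mu> * s)) has_real_derivative exp (- \<mu> * t1) * (- \<mu>)) (at t1)"
      by (auto intro!: derivative_eq_intros)
    have "((\<lambda>s. ustar nn r - c * exp (- \<mu> * s) * \<phi> r - u x1 s) has_real_derivative
        0 - c * (exp (- \<mu> * t1) * (- \<mu>)) * \<phi> r - ut x1 t1) (at t1)"
      using u_diff x1 t1 by (intro DERIV_diff DERIV_const DERIV_cmult_right DERIV_cmult dexp) blast
    hence "0 - c * (exp (- \<mu> * t1) * (- \<mu>)) * \<phi> r - ut x1 t1 \<ge> 0"
      by (rule time_max[OF _ t1]) (use mx x1 in \<open>auto simp: V_def r_def\<close>)
    hence ut1: "ut x1 t1 \<le> \<mu> * (E * \<phi> r)" by (simp add: E_def algebra_simps)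
    have pde1: "ut x1 t1 = (\<Sum>i\<in>UNIV. D2u x1 t1 $ i $ i) + u x1 t1 * b^3"
      using pde x1 t1 by (simp add: b_def)
    define w where "w = root 3 r"
    have w: "w > 0" "r = w^3" using r by (auto simp: w_def odd_real_root_pow)
    define q where "q = r powr k"
    have q: "q > 0" using r by (simp add: q_def)
    have p1: "A*k*q/r - (k+2)*q*r \<ge> 0" using phi1_nonneg[OF r] phiform(2)[OF r(1)] by (simp add: q_def)
    have p0: "q * (A - r^2) \<ge> 0" using phi_nonneg[of r] r phiform(1)[OF r(1)] by (simp add: q_def)
    have mu: "\<mu> * (A - r^2) < 4*k - 4*N + 10"
    proof -
      have "\<mu> * (A - r^2) \<le> 1" using Apos by (simp add: \<mu>_def field_simps)
      moreover have "4*k - 4*N + 10 = 4 * \<nu> + 4" by (simp add: k_def)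
      ultimately show ?thesis using nu0 by linarith
    qed
    have sa: "\<mu> * (E * \<phi> r) < (U2 r - E * \<phi>2 r) + (N - 1)/r * G1 r + G r * (G1 r)^3"
      using sub_alg[OF w(1) w(2) q Epos al3 alp kq p1 p0 mu]
      unfolding G_def G1_def phiform[OF r(1)] U1_def U2_def ustar_n w_def[symmetric] q_def[symmetric]
      by simp
    have "(G r - u x1 t1) * b^3 > 0"
      using sa ut1 pde1 sp2 unfolding sp1 by (simp add: algebra_simps)
    moreover have "G r - u x1 t1 > 0" using pos GV by (simp add: r_def)
    moreover have "b^3 \<le> 0" using bneg by (simp add: power_odd_eq power3_eq_cube mult_nonpos_nonneg mult_nonneg_nonpos)
    ultimately show False by (simp add: mult_pos_neg zero_less_mult_iff)
  qed
  define C where "C = c * A * R powr k"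
  have Cpos: "C > 0" using cpos Apos R_pos by (simp add: C_def)
  have bound: "\<forall>t\<ge>0. \<forall>x\<in>ball 0 R. \<bar>u x t - ustar CARD('n) (norm x)\<bar> \<le> C * exp (- \<mu> * t)"
  proof (intro allI impI ballI)
    fix t :: real and x :: "real^'n" assume t: "t \<ge> 0" and x: "x \<in> ball 0 R"
    have xc: "x \<in> cball 0 R" using x by auto
    have up: "u x t \<le> ustar nn (norm x)" using upper xc t by auto
    have lo: "ustar nn (norm x) - c * exp (- \<mu> * t) * \<phi> (norm x) \<le> u x t"
      using lower xc t by (auto simp: V_def)
    have "\<phi> (norm x) \<le> A * R powr k" using phi_ub[of "norm x"] xc by simp
    hence "c * exp (- \<mu> * t) * \<phi> (norm x) \<le> c * exp (- \<mu> * t) * (A * R powr k)"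
      using cpos by (intro mult_left_mono) simp_all
    hence "\<bar>u x t - ustar nn (norm x)\<bar> \<le> C * exp (- \<mu> * t)" using up lo by (simp add: C_def algebra_simps)
    thus "\<bar>u x t - ustar CARD('n) (norm x)\<bar> \<le> C * exp (- \<mu> * t)" by (simp add: nn_def)
  qed
  have ul: "uniform_limit (ball 0 R) (\<lambda>t x. u x t) (\<lambda>x. ustar CARD('n) (norm x)) at_top"
    unfolding uniform_limit_iff
  proof (intro allI impI)
    fix e :: real assume e: "e > 0"
    define T where "T = max 0 (ln (C / e) / \<mu>)"
    have "\<forall>\<^sub>F t in at_top. t > T" by (rule eventually_gt_at_top)
    thus "\<forall>\<^sub>F t in at_top. \<forall>x\<in>ball 0 R. dist (u x t) (ustar CARD('n) (norm x)) < e"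
    proof (rule eventually_mono)
      fix t assume tT: "t > T"
      have t0: "t \<ge> 0" using tT by (simp add: T_def)
      have "ln (C / e) / \<mu> < t" using tT by (simp add: T_def)
      hence "ln (C / e) < \<mu> * t" using mupos by (simp add: field_simps)
      hence "- \<mu> * t < ln (e / C)" using Cpos e by (simp add: ln_div)
      hence "exp (- \<mu> * t) < e / C" using Cpos e by (metis exp_less_cancel_iff exp_ln divide_pos_pos)
      hence "C * exp (- \<mu> * t) < e" using Cpos by (simp add: field_simps)
      thus "\<forall>x\<in>ball 0 R. dist (u x t) (ustar CARD('n) (norm x)) < e"
        using bound t0 by (force simp: dist_real_def)
    qed
  qed
  show ?thesis using ul bound Cpos mupos by blast
qed

end
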